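(* Let $\alpha$ be a curve in $\mathbb{R}^3$, let $\alpha_T$ be its tangent indicatrix, and let $\beta$ be a Mannheim-direction curve of $\alpha_T$ (an $X$-direction curve of $\alpha_T$ with $N_\beta=B_T$). Then: (i) $\alpha$ is a straight line if and only if $\beta$ is a helix; (ii) $\alpha$ is a slant helix if and only if $\beta$ is a slant helix.
   Context: Let $\alpha:I\subset\mathbb{R}\to\mathbb{R}^3$ be a unit-speed curve with curvature $\kappa>0$, torsion $\tau$ and Frenet frame $\{T,N,B\}$. The Frenet frame with $N=T'/\kappa$ is used throughout. The tangent indicatrix of $\alpha$ is the curve $\alpha_T=T$ on the unit sphere. Its arc length is $s_T=\int\kappa\,ds$. Its Frenet apparatus is $\{T_T,N_T,B_T,\kappa_T,\tau_T\}$, with $\frac{dT_T}{ds_T}=\kappa_TN_T$, $\frac{dN_T}{ds_T}=-\kappa_TT_T+\tau_TB_T$ and $\frac{dB_T}{ds_T}=-\tau_TN_T$. Let $x,y,z$ be real functions of $s_T$ with $x^2+y^2+z^2=1$, and set $X=xT_T+yN_T+zB_T$. An integral curve $\beta$ of $X$, meaning $d\beta/ds_T=X$, is an $X$-direction curve of $\alpha_T$. It is regarded as a unit-speed Frenet curve with frame $\{T_\beta=X,N_\beta,B_\beta\}$, curvature $\kappa_\beta>0$ and torsion $\tau_\beta$. $\beta$ is a Mannheim-direction curve of $\alpha_T$ if $N_\beta=B_T$. A curve with curvature $k>0$ and torsion $t$ is a helix if its unit tangent makes a constant angle with a fixed line; equivalently, $t/k$ is constant. It is a slant helix if its principal normal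 makes a constant angle with a fixed line; equivalently, $\frac{k^2}{(k^2+t^2)^{3/2}}(t/k)'$ is constant, where $'$ is the derivative with respect to arc length. *)

theory Defs
  imports "HOL-Analysis.Analysis" "HOL-Analysis.Cross3"
begin

definition frenet_curve ::
  "real set \<Rightarrow> (real \<Rightarrow> real^3) \<Rightarrow> (real \<Rightarrow> real^3) \<Rightarrow> (real \<Rightarrow> real^3)
     \<Rightarrow> (real \<Rightarrow> real^3) \<Rightarrow> (real \<Rightarrow> real) \<Rightarrow> (real \<Rightarrow> real) \<Rightarrow> bool" where
  "frenet_curve J c Tc Nc Bc k t \<longleftrightarrow>
     (\<forall>s\<in>J.
        (c has_vector_derivative Tc s) (at s) \<and>
        norm (Tc s) = 1 \<and>
        k s > 0 \<and>
        (Tc has_vector_derivative (k s *\<^sub>R Nc s)) (at s) \<and>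
        norm (Nc s) = 1 \<and>
        Bc s = cross3 (Tc s) (Nc s) \<and>
        (Nc has_vector_derivative (- (k s) *\<^sub>R Tc s + t s *\<^sub>R Bc s)) (at s) \<and>
        (Bc has_vector_derivative (- (t s) *\<^sub>R Nc s)) (at s))"

definition straight_line :: "real set \<Rightarrow> (real \<Rightarrow> real^3) \<Rightarrow> bool" where
  "straight_line J c \<longleftrightarrow> (\<exists>p v. v \<noteq> 0 \<and> (\<forall>s\<in>J. \<exists>r. c s = p + r *\<^sub>R v))"

definition helix :: "real set \<Rightarrow> (real \<Rightarrow> real^3) \<Rightarrow> bool" where
  "helix J Tc \<longleftrightarrow> (\<exists>u. norm u = 1 \<and> (\<exists>a. \<forall>s\<in>J. Tc s \<bullet> u = a))"

definition slant_helix :: "real set \<Rightarrow> (real \<Rightarrow> real^3) \<Rightarrow> bool" where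
  "slant_helix J Nc \<longleftrightarrow> (\<exists>u. norm u = 1 \<and> (\<exists>a. \<forall>s\<in>J. Nc s \<bullet> u = a))"

end

theory Submission
  imports Defs
begin


lemma dot_deriv:
  assumes "(F has_vector_derivative F') (at t)" "(G has_vector_derivative G') (at t)"
  shows "((\<lambda>t. F t \<bullet> G t) has_real_derivative (F' \<bullet> G t + F t \<bullet> G')) (at t)"
proof -
  have "((\<lambda>t. F t \<bullet> G t) has_derivative (\<lambda>h. F t \<bullet> (h *\<^sub>R G') + (h *\<^sub>R F') \<bullet> G t)) (at t)"
    using has_derivative_inner[OF assms[unfolded has_vector_derivative_def]] by simp
  then show ?thesis unfolding has_field_derivative_def
    by (rule has_derivative_eq_rhs) (auto simp: algebra_simps)
qed

lemma dot_deriv_const: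
  assumes "(F has_vector_derivative F') (at t)"
  shows "((\<lambda>t. F t \<bullet> w) has_real_derivative (F' \<bullet> w)) (at t)"
  using dot_deriv[OF assms, of "\<lambda>_. w" 0] by simp

lemma loc_const:
  assumes "open S" "s \<in> S" "(f has_real_derivative D) (at s)" "\<forall>t\<in>S. f t = c"
  shows "D = 0"
proof -
  have "((\<lambda>_. c) has_real_derivative D) (at s)"
    using has_field_derivative_transform_within_open[OF assms(3,1,2)] assms(4) by auto
  then show ?thesis using DERIV_const DERIV_unique by blast
qed

lemma comp_const:
  assumes "open I" "s \<in> I" "(sT has_real_derivative k) (at s)" "k \<noteq> 0"
    "(g has_real_derivative D) (at (sT s))" "\<forall>s'\<in>I. g (sT s') = c"
  shows "D = 0"
proof -
  have "((\<lambda>s. g (sT s)) has_real_derivative D * k) (at s)"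
    using DERIV_chain2[OF assms(5,3)] .
  then have "D * k = 0" using loc_const[OF assms(1,2)] assms(6) by blast
  then show ?thesis using assms(4) by simp
qed

lemma comp_constant:
  assumes "is_interval I" "\<forall>s\<in>I. (sT has_real_derivative k s) (at s)"
    "\<forall>s\<in>I. (g has_real_derivative 0) (at (sT s))" "s0 \<in> I"
  shows "\<forall>s\<in>I. g (sT s) = g (sT s0)"
proof -
  have "\<exists>c. \<forall>s\<in>I. g (sT s) = c"
  proof (rule has_field_derivative_zero_constant)
    show "convex I" using assms(1) by (simp add: is_interval_convex)
    fix s assume "s \<in> I"
    then have "((\<lambda>s. g (sT s)) has_real_derivative 0 * k s) (at s)"
      using DERIV_chain2 assms by blast
    then show "((\<lambda>s. g (sT s)) has_real_derivative 0) (at s within I)"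
      by (simp add: has_field_derivative_at_within)
  qed
  then show ?thesis using assms(4) by auto
qed

lemma cross_triple: "cross3 (cross3 a b) u = (a \<bullet> u) *\<^sub>R b - (b \<bullet> u) *\<^sub>R a"
  for a b u :: "real^3"
  by (simp add: vec_eq_iff cross3_def inner_vec_def sum_3 forall_3 algebra_simps)

lemma ortho_zero:
  fixes a b u :: "real^3"
  assumes "norm a = 1" "norm b = 1" "a \<bullet> b = 0" "u \<bullet> a = 0" "u \<bullet> b = 0" "u \<bullet> cross3 a b = 0"
  shows "u = 0"
proof -
  have c: "(norm (cross3 a b))\<^sup>2 = 1" using norm_cross_dot[of a b] assms by simp
  have "cross3 (cross3 a b) u = 0" using assms by (simp add: cross_triple inner_commute)
  then have "(norm (cross3 a b) * norm u)\<^sup>2 = 0"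
    using norm_cross_dot[of "cross3 a b" u] assms(6) by (simp add: inner_commute)
  then show ?thesis using c by (simp add: power_mult_distrib)
qed


theorem theorem6p7:
  fixes I :: "real set"
    and \<alpha> T N B :: "real \<Rightarrow> real^3" and \<kappa> \<tau> :: "real \<Rightarrow> real"
    and sT :: "real \<Rightarrow> real"
    and \<alpha>T TT NT BT :: "real \<Rightarrow> real^3" and \<kappa>T \<tau>T :: "real \<Rightarrow> real"
    and x y z :: "real \<Rightarrow> real" and X :: "real \<Rightarrow> real^3"
    and \<beta> N\<beta> B\<beta> :: "real \<Rightarrow> real^3" and \<kappa>\<beta> \<tau>\<beta> :: "real \<Rightarrow> real"
  assumes I: "is_interval I" "open I" "I \<noteq> {}"
    and alpha: "frenet_curve I \<alpha> T N B \<kappa> \<tau>"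
    and arclen: "\<forall>s\<in>I. (sT has_real_derivative \<kappa> s) (at s)"
    and indicatrix: "\<forall>s\<in>I. \<alpha>T (sT s) = T s"
    and indicatrix_frenet: "frenet_curve (sT ` I) \<alpha>T TT NT BT \<kappa>T \<tau>T"
    and xyz: "\<forall>u\<in>sT ` I. (x u)\<^sup>2 + (y u)\<^sup>2 + (z u)\<^sup>2 = 1"
    and X: "X = (\<lambda>u. x u *\<^sub>R TT u + y u *\<^sub>R NT u + z u *\<^sub>R BT u)"
    and beta: "frenet_curve (sT ` I) \<beta> X N\<beta> B\<beta> \<kappa>\<beta> \<tau>\<beta>"
    and mannheim: "\<forall>u\<in>sT ` I. N\<beta> u = BT u"
  shows "(straight_line I \<alpha> \<longleftrightarrow> helix (sT ` I) X) \<and>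
         (slant_helix I N \<longleftrightarrow> slant_helix (sT ` I) N\<beta>)"
proof -
  have FA: "\<And>s. s \<in> I \<Longrightarrow> (\<alpha> has_vector_derivative T s) (at s) \<and> norm (T s) = 1 \<and> \<kappa> s > 0 \<and>
        (T has_vector_derivative (\<kappa> s *\<^sub>R N s)) (at s) \<and> norm (N s) = 1"
    using alpha unfolding frenet_curve_def by blast
  have FT: "\<And>u. u \<in> sT ` I \<Longrightarrow> (\<alpha>T has_vector_derivative TT u) (at u) \<and> norm (TT u) = 1 \<and> \<kappa>T u > 0 \<and>
        (TT has_vector_derivative (\<kappa>T u *\<^sub>R NT u)) (at u) \<and> norm (NT u) = 1 \<and>
        BT u = cross3 (TT u) (NT u) \<and>
        (NT has_vector_derivative (- (\<kappa>T u) *\<^sub>R TT u + \<tau>T u *\<^sub>R BT u)) (at u) \<and>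
        (BT has_vector_derivative (- (\<tau>T u) *\<^sub>R NT u)) (at u)"
    using indicatrix_frenet unfolding frenet_curve_def by blast
  have FB: "\<And>u. u \<in> sT ` I \<Longrightarrow> norm (X u) = 1 \<and> \<kappa>\<beta> u > 0 \<and>
        (X has_vector_derivative (\<kappa>\<beta> u *\<^sub>R N\<beta> u)) (at u) \<and> norm (N\<beta> u) = 1"
    using beta unfolding frenet_curve_def by blast
  have kpos: "\<And>s. s \<in> I \<Longrightarrow> \<kappa> s \<noteq> 0" using FA by fastforce
  have sTd: "\<And>s. s \<in> I \<Longrightarrow> (sT has_real_derivative \<kappa> s) (at s)" using arclen by blast
  have BTn: "\<And>u. u \<in> sT ` I \<Longrightarrow> BT u \<bullet> BT u = 1"
    using FB mannheim by (metis norm_eq_1)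
  have K1: "TT (sT s) \<bullet> NT (sT s) = 0" if s: "s \<in> I" for s
  proof -
    have u: "sT s \<in> sT ` I" using s by blast
    have "(\<kappa>T (sT s) *\<^sub>R NT (sT s)) \<bullet> TT (sT s) + TT (sT s) \<bullet> (\<kappa>T (sT s) *\<^sub>R NT (sT s)) = 0"
      apply (rule comp_const[OF I(2) s sTd[OF s] kpos[OF s], where g="\<lambda>v. TT v \<bullet> TT v" and c=1])
      using dot_deriv FT[OF u] apply blast
      using FT by (auto simp: norm_eq_1)
    then have "\<kappa>T (sT s) * (TT (sT s) \<bullet> NT (sT s)) = 0" by (simp add: inner_commute)
    then show ?thesis using FT[OF u] by simp
  qed
  have K2: "X (sT s) \<bullet> BT (sT s) = 0" if s: "s \<in> I" for s
  proof -
    have u: "sT s \<in> sT ` I" using s by blast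
    have "(\<kappa>\<beta> (sT s) *\<^sub>R N\<beta> (sT s)) \<bullet> X (sT s) + X (sT s) \<bullet> (\<kappa>\<beta> (sT s) *\<^sub>R N\<beta> (sT s)) = 0"
      apply (rule comp_const[OF I(2) s sTd[OF s] kpos[OF s], where g="\<lambda>v. X v \<bullet> X v" and c=1])
      using dot_deriv FB[OF u] apply blast
      using FB by (auto simp: norm_eq_1)
    then have "\<kappa>\<beta> (sT s) * (X (sT s) \<bullet> N\<beta> (sT s)) = 0" by (simp add: inner_commute)
    then show ?thesis using FB[OF u] mannheim u by simp
  qed
  have K3: "\<tau>T (sT s) \<noteq> 0" if s: "s \<in> I" for s
  proof -
    have u: "sT s \<in> sT ` I" using s by blast
    have "(\<kappa>\<beta> (sT s) *\<^sub>R N\<beta> (sT s)) \<bullet> BT (sT s) + X (sT s) \<bullet> (- (\<tau>T (sT s)) *\<^sub>R NT (sT s)) = 0"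
      apply (rule comp_const[OF I(2) s sTd[OF s] kpos[OF s], where g="\<lambda>v. X v \<bullet> BT v" and c=0])
      using dot_deriv FB[OF u] FT[OF u] apply blast
      using K2 by auto
    then have "\<kappa>\<beta> (sT s) = \<tau>T (sT s) * (X (sT s) \<bullet> NT (sT s))"
      using mannheim u BTn[OF u] by simp
    then show ?thesis using FB[OF u] by auto
  qed
  have K4: "TT (sT s) = N s" if s: "s \<in> I" for s
  proof -
    have u: "sT s \<in> sT ` I" using s by blast
    have "((\<alpha>T \<circ> sT) has_vector_derivative (\<kappa> s *\<^sub>R TT (sT s))) (at s)"
      apply (rule vector_diff_chain_at)
      using sTd[OF s] has_real_derivative_iff_has_vector_derivative apply blast
      using FT[OF u] by blast
    then have "(T has_vector_derivative (\<kappa> s *\<^sub>R TT (sT s))) (at s)"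
      by (rule has_vector_derivative_transform_within_open[OF _ I(2) s]) (use indicatrix in auto)
    then have "\<kappa> s *\<^sub>R TT (sT s) = \<kappa> s *\<^sub>R N s"
      using FA[OF s] vector_derivative_unique_at by blast
    then show ?thesis using kpos[OF s] by simp
  qed
  obtain s0 where s0: "s0 \<in> I" using I(3) by blast
  have nsl: "\<not> straight_line I \<alpha>"
  proof
    assume "straight_line I \<alpha>"
    then obtain p v where v: "v \<noteq> 0" and pv: "\<forall>s\<in>I. \<exists>r. \<alpha> s = p + r *\<^sub>R v"
      unfolding straight_line_def by blast
    have TN: "T s \<bullet> w = 0 \<and> N s \<bullet> w = 0" if s: "s \<in> I" and w: "w \<bullet> v = 0" for s w
    proof -
      have c1: "\<forall>t\<in>I. \<alpha> t \<bullet> w = p \<bullet> w"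
      proof
        fix t assume "t \<in> I"
        then obtain r where "\<alpha> t = p + r *\<^sub>R v" using pv by blast
        then show "\<alpha> t \<bullet> w = p \<bullet> w" using w by (simp add: inner_add_left inner_commute[of v w])
      qed
      have T0: "\<forall>t\<in>I. T t \<bullet> w = 0"
        using loc_const[OF I(2) _ dot_deriv_const c1] FA by blast
      have "(\<kappa> s *\<^sub>R N s) \<bullet> w = 0"
        using loc_const[OF I(2) s dot_deriv_const T0] FA[OF s] by blast
      then show ?thesis using T0 s kpos[OF s] by simp
    qed
    have TN0: "T s0 \<bullet> N s0 = 0"
    proof -
      have "(\<kappa> s0 *\<^sub>R N s0) \<bullet> T s0 + T s0 \<bullet> (\<kappa> s0 *\<^sub>R N s0) = 0"
        apply (rule loc_const[OF I(2) s0, where f="\<lambda>t. T t \<bullet> T t" and c=1])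
        using dot_deriv FA[OF s0] apply blast
        using FA by (auto simp: norm_eq_1)
      then show ?thesis using kpos[OF s0] by (simp add: inner_commute)
    qed
    define w where "w = (T s0 \<bullet> v) *\<^sub>R N s0 - (N s0 \<bullet> v) *\<^sub>R T s0"
    have "w \<bullet> v = 0" unfolding w_def by (simp add: inner_diff_left)
    then have "T s0 \<bullet> w = 0" using TN s0 by blast
    then have Nv: "N s0 \<bullet> v = 0" unfolding w_def using TN0 FA[OF s0]
      by (auto simp: inner_diff_right norm_eq_1)
    then have "N s0 \<bullet> N s0 = 0" using TN s0 by blast
    then show False using FA[OF s0] by (simp add: norm_eq_1)
  qed
  have nh: "\<not> helix (sT ` I) X"
  proof
    assume "helix (sT ` I) X"
    then obtain w a where w: "norm w = 1" and a: "\<forall>u\<in>sT ` I. X u \<bullet> w = a"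
      unfolding helix_def by blast
    have B0: "BT (sT s) \<bullet> w = 0" if s: "s \<in> I" for s
    proof -
      have u: "sT s \<in> sT ` I" using s by blast
      have "(\<kappa>\<beta> (sT s) *\<^sub>R N\<beta> (sT s)) \<bullet> w = 0"
        apply (rule comp_const[OF I(2) s sTd[OF s] kpos[OF s], where g="\<lambda>v. X v \<bullet> w" and c=a])
        using dot_deriv_const FB[OF u] apply blast
        using a by auto
      then show ?thesis using FB[OF u] mannheim u by simp
    qed
    have N0: "NT (sT s) \<bullet> w = 0" if s: "s \<in> I" for s
    proof -
      have u: "sT s \<in> sT ` I" using s by blast
      have "(- (\<tau>T (sT s)) *\<^sub>R NT (sT s)) \<bullet> w = 0"
        apply (rule comp_const[OF I(2) s sTd[OF s] kpos[OF s], where g="\<lambda>v. BT v \<bullet> w" and c=0])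
        using dot_deriv_const FT[OF u] apply blast
        using B0 by auto
      then show ?thesis using K3[OF s] by simp
    qed
    have T0: "TT (sT s) \<bullet> w = 0" if s: "s \<in> I" for s
    proof -
      have u: "sT s \<in> sT ` I" using s by blast
      have "(- (\<kappa>T (sT s)) *\<^sub>R TT (sT s) + \<tau>T (sT s) *\<^sub>R BT (sT s)) \<bullet> w = 0"
        apply (rule comp_const[OF I(2) s sTd[OF s] kpos[OF s], where g="\<lambda>v. NT v \<bullet> w" and c=0])
        using dot_deriv_const FT[OF u] apply blast
        using N0 by auto
      then have "- \<kappa>T (sT s) * (TT (sT s) \<bullet> w) + \<tau>T (sT s) * (BT (sT s) \<bullet> w) = 0"
        by (simp only: inner_add_left inner_scaleR_left)
      then have "\<kappa>T (sT s) * (TT (sT s) \<bullet> w) = 0" using B0[OF s] by simp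
      then show ?thesis using FT[OF u] by simp
    qed
    have u0: "sT s0 \<in> sT ` I" using s0 by blast
    have "w = 0"
      apply (rule ortho_zero[of "TT (sT s0)" "NT (sT s0)"])
      using FT[OF u0] K1[OF s0] T0[OF s0] N0[OF s0] B0[OF s0]
      by (auto simp: inner_commute)
    then show False using w by simp
  qed
  have sh: "slant_helix I N \<longleftrightarrow> slant_helix (sT ` I) N\<beta>"
  proof
    assume "slant_helix I N"
    then obtain w a where w: "norm w = 1" and a: "\<forall>s\<in>I. N s \<bullet> w = a"
      unfolding slant_helix_def by blast
    have N0: "NT (sT s) \<bullet> w = 0" if s: "s \<in> I" for s
    proof -
      have u: "sT s \<in> sT ` I" using s by blast
      have "(\<kappa>T (sT s) *\<^sub>R NT (sT s)) \<bullet> w = 0"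
        apply (rule comp_const[OF I(2) s sTd[OF s] kpos[OF s], where g="\<lambda>v. TT v \<bullet> w" and c=a])
        using dot_deriv_const FT[OF u] apply blast
        using a K4 by auto
      then show ?thesis using FT[OF u] by simp
    qed
    have "\<forall>s\<in>I. BT (sT s) \<bullet> w = BT (sT s0) \<bullet> w"
    proof (rule comp_constant[OF I(1) arclen _ s0, where g="\<lambda>v. BT v \<bullet> w"], intro ballI)
      fix s assume s: "s \<in> I"
      have u: "sT s \<in> sT ` I" using s by blast
      have d: "(BT has_vector_derivative (- (\<tau>T (sT s)) *\<^sub>R NT (sT s))) (at (sT s))" using FT[OF u] by blast
      show "((\<lambda>v. BT v \<bullet> w) has_real_derivative 0) (at (sT s))"
        using dot_deriv_const[OF d, of w] N0[OF s] by simp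
    qed
    then show "slant_helix (sT ` I) N\<beta>"
      unfolding slant_helix_def using w mannheim by auto
  next
    assume "slant_helix (sT ` I) N\<beta>"
    then obtain w b where w: "norm w = 1" and b: "\<forall>u\<in>sT ` I. BT u \<bullet> w = b"
      unfolding slant_helix_def using mannheim by auto
    have N0: "NT (sT s) \<bullet> w = 0" if s: "s \<in> I" for s
    proof -
      have u: "sT s \<in> sT ` I" using s by blast
      have "(- (\<tau>T (sT s)) *\<^sub>R NT (sT s)) \<bullet> w = 0"
        apply (rule comp_const[OF I(2) s sTd[OF s] kpos[OF s], where g="\<lambda>v. BT v \<bullet> w" and c=b])
        using dot_deriv_const FT[OF u] apply blast
        using b by auto
      then show ?thesis using K3[OF s] by simp
    qed
    have "\<forall>s\<in>I. TT (sT s) \<bullet> w = TT (sT s0) \<bullet> w"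
    proof (rule comp_constant[OF I(1) arclen _ s0, where g="\<lambda>v. TT v \<bullet> w"], intro ballI)
      fix s assume s: "s \<in> I"
      have u: "sT s \<in> sT ` I" using s by blast
      have d: "(TT has_vector_derivative (\<kappa>T (sT s) *\<^sub>R NT (sT s))) (at (sT s))" using FT[OF u] by blast
      show "((\<lambda>v. TT v \<bullet> w) has_real_derivative 0) (at (sT s))"
        using dot_deriv_const[OF d, of w] N0[OF s] by simp
    qed
    then show "slant_helix I N"
      unfolding slant_helix_def using w K4 by auto
  qed
  show ?thesis using nsl nh sh by blast
qed

end
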